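(* For any distributions $p_H,p_\Gamma$ of the gains (with $H,\Gamma\ge0$ independent) and any rates $R_s\ge0$, $R_c>0$, one has $ED_s(R_s,R_c)\ge ED_j(R_s+R_c)$. Consequently $ED_s^*:=\inf_{R_s\ge0,R_c>0}ED_s(R_s,R_c)\ \ge\ ED_j^*:=\inf_{R_j>0}ED_j(R_j)$.
   Context: $H\ge0$, $\Gamma\ge0$ are the channel and side-information gains. Logarithms base 2. Define $D_d(R,\gamma)=(\gamma+2^{2R})^{-1}$. Separate source-channel coding (SSCC): for $R_s\ge0,R_c>0$, outage set $\mathcal O_s=\{(h,\gamma): R_c\ge\tfrac12\log_2(1+h)\}\cup\{(h,\gamma): R_c\le \tfrac12\log_2(1+\tfrac{2^{2(R_s+R_c)}-1}{1+\gamma})\}$ and $ED_s(R_s,R_c)=\mathrm E[D_d(R_s+R_c,\Gamma)\mathbf 1\{(H,\Gamma)\notin\mathcal O_s\}]+\mathrm E[D_d(0,\Gamma)\mathbf 1\{(H,\Gamma)\in\mathcal O_s\}]$. Joint decoding scheme (JDS): for $R_j>0$, outage set $\mathcal O_j=\{(h,\gamma):\tfrac12\log_2(1+\tfrac{2^{2R_j}-1}{\gamma+1})\ge\tfrac12\log_2(1+h)\}$ and $ED_j(R_j)=\mathrm E[D_d(R_j,\Gamma)\mathbf 1\{(H,\Gamma)\notin\mathcal O_j\}]+\mathrm E[D_d(0,\Gamma)\mathbf 1\{(H,\Gamma)\in\mathcal O_j\}]$. *)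

theory Defs
  imports "HOL-Probability.Probability"
begin

definition D_d :: "real \<Rightarrow> real \<Rightarrow> real" where
  "D_d R \<gamma> = inverse (\<gamma> + 2 powr (2 * R))"

definition outage_s :: "real \<Rightarrow> real \<Rightarrow> (real \<times> real) set" where
  "outage_s Rs Rc =
     {(h, \<gamma>). Rc \<ge> 1/2 * log 2 (1 + h)} \<union>
     {(h, \<gamma>). Rc \<le> 1/2 * log 2 (1 + (2 powr (2 * (Rs + Rc)) - 1) / (1 + \<gamma>))}"

definition outage_j :: "real \<Rightarrow> (real \<times> real) set" where
  "outage_j Rj =
     {(h, \<gamma>). 1/2 * log 2 (1 + (2 powr (2 * Rj) - 1) / (\<gamma> + 1)) \<ge> 1/2 * log 2 (1 + h)}"

definition ED_s :: "(real \<times> real) measure \<Rightarrow> real \<Rightarrow> real \<Rightarrow> real" where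
  "ED_s M Rs Rc =
     (\<integral>x. D_d (Rs + Rc) (snd x) * indicator (- outage_s Rs Rc) x \<partial>M)
   + (\<integral>x. D_d 0 (snd x) * indicator (outage_s Rs Rc) x \<partial>M)"

definition ED_j :: "(real \<times> real) measure \<Rightarrow> real \<Rightarrow> real" where
  "ED_j M Rj =
     (\<integral>x. D_d Rj (snd x) * indicator (- outage_j Rj) x \<partial>M)
   + (\<integral>x. D_d 0 (snd x) * indicator (outage_j Rj) x \<partial>M)"

end

theory Submission
  imports Defs
begin

lemma m_s1: "(\<lambda>x::real\<times>real. 1/2 * log 2 (1 + fst x)) \<in> borel_measurable (borel \<Otimes>\<^sub>M borel)"
  by measurable
lemma m_s2: "(\<lambda>x::real\<times>real. 1/2 * log 2 (1 + c / (1 + snd x))) \<in> borel_measurable (borel \<Otimes>\<^sub>M borel)"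
  by measurable

lemma meas_s: "outage_s Rs Rc \<in> sets (borel \<Otimes>\<^sub>M borel :: (real\<times>real) measure)"
proof -
  let ?N = "borel \<Otimes>\<^sub>M borel :: (real\<times>real) measure"
  have "outage_s Rs Rc = {x\<in>space ?N. 1/2 * log 2 (1 + fst x) \<le> (\<lambda>_. Rc) x} \<union>
     {x\<in>space ?N. (\<lambda>_. Rc) x \<le> 1/2 * log 2 (1 + (2 powr (2 * (Rs + Rc)) - 1) / (1 + snd x))}"
    by (auto simp: outage_s_def space_pair_measure)
  also have "\<dots> \<in> sets ?N"
    by (intro sets.Un borel_measurable_le m_s1 m_s2 borel_measurable_const)
  finally show ?thesis .
qed

lemma meas_j: "outage_j Rj \<in> sets (borel \<Otimes>\<^sub>M borel :: (real\<times>real) measure)"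
proof -
  let ?N = "borel \<Otimes>\<^sub>M borel :: (real\<times>real) measure"
  have "outage_j Rj = {x\<in>space ?N. 1/2 * log 2 (1 + fst x) \<le> 1/2 * log 2 (1 + (2 powr (2 * Rj) - 1) / (1 + snd x))}"
    by (auto simp: outage_j_def space_pair_measure add.commute)
  also have "\<dots> \<in> sets ?N"
    by (intro borel_measurable_le m_s1 m_s2)
  finally show ?thesis .
qed

lemma m_D: "(\<lambda>x::real\<times>real. D_d R (snd x)) \<in> borel_measurable (borel \<Otimes>\<^sub>M borel)"
  unfolding D_d_def by measurable

lemma Oj_sub: "outage_j (Rs + Rc) \<subseteq> outage_s Rs Rc"
  by (auto simp: outage_j_def outage_s_def add.commute)

lemma Dd_mono: "R \<ge> 0 \<Longrightarrow> g \<ge> 0 \<Longrightarrow> D_d R g \<le> D_d 0 g"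
  unfolding D_d_def by (auto intro!: le_imp_inverse_le simp: ge_one_powr_ge_zero)

lemma Dd_bnd: "R \<ge> 0 \<Longrightarrow> g \<ge> 0 \<Longrightarrow> 0 \<le> D_d R g \<and> D_d R g \<le> 1"
  unfolding D_d_def
  by (auto simp: inverse_le_1_iff ge_one_powr_ge_zero add_increasing)

lemma ED_bounds:
  fixes M :: "(real\<times>real) measure" and Ob :: "(real\<times>real) set"
  assumes P: "prob_space M" and S: "sets M = sets (borel \<Otimes>\<^sub>M borel)"
    and AE: "AE x in M. snd x \<ge> 0" and R: "R \<ge> 0"
    and Ob: "Ob \<in> sets (borel \<Otimes>\<^sub>M borel)"
  shows "(\<integral>x. D_d R (snd x) * indicator (- Ob) x \<partial>M) + (\<integral>x. D_d 0 (snd x) * indicator Ob x \<partial>M)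
       = (\<integral>x. (if x \<in> Ob then D_d 0 (snd x) else D_d R (snd x)) \<partial>M)"
    and "integrable M (\<lambda>x. if x \<in> Ob then D_d 0 (snd x) else D_d R (snd x))"
    and "0 \<le> (\<integral>x. (if x \<in> Ob then D_d 0 (snd x) else D_d R (snd x)) \<partial>M)"
proof -
  interpret prob_space M by fact
  have mc: "\<And>f. f \<in> borel_measurable (borel \<Otimes>\<^sub>M borel) \<Longrightarrow> f \<in> borel_measurable M"
    using measurable_cong_sets[OF S refl] by blast
  have OM: "Ob \<in> sets M" using Ob S by simp
  have OcM: "- Ob \<in> sets M"
  proof -
    have "- Ob = space M - Ob" using S by (simp add: space_pair_measure sets_eq_imp_space_eq[OF S] Compl_eq_Diff_UNIV)
    thus ?thesis using OM by auto
  qed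
  have int: "integrable M (\<lambda>x. D_d R' (snd x) * indicator A x)" if "R' \<ge> 0" "A \<in> sets M" for R' A
  proof (rule integrable_const_bound[where B=1])
    show "AE x in M. norm (D_d R' (snd x) * indicator A x) \<le> 1"
      using AE by eventually_elim (use Dd_bnd[OF that(1)] in \<open>auto simp: indicator_def\<close>)
    show "(\<lambda>x. D_d R' (snd x) * indicator A x) \<in> borel_measurable M"
      using that(2) by (intro borel_measurable_times mc m_D borel_measurable_indicator)
  qed
  have eq: "(\<lambda>x. if x \<in> Ob then D_d 0 (snd x) else D_d R (snd x)) =
      (\<lambda>x. D_d R (snd x) * indicator (- Ob) x + D_d 0 (snd x) * indicator Ob x)"
    by (auto simp: indicator_def)
  show "(\<integral>x. D_d R (snd x) * indicator (- Ob) x \<partial>M) + (\<integral>x. D_d 0 (snd x) * indicator Ob x \<partial>M)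
       = (\<integral>x. (if x \<in> Ob then D_d 0 (snd x) else D_d R (snd x)) \<partial>M)"
    unfolding eq using int[OF R OcM] int[OF order_refl OM] by (simp add: integral_add)
  show "integrable M (\<lambda>x. if x \<in> Ob then D_d 0 (snd x) else D_d R (snd x))"
    unfolding eq using int[OF R OcM] int[OF order_refl OM] by (rule Bochner_Integration.integrable_add)
  show "0 \<le> (\<integral>x. (if x \<in> Ob then D_d 0 (snd x) else D_d R (snd x)) \<partial>M)"
    proof (rule integral_nonneg_AE)
    show "AE x in M. 0 \<le> (if x \<in> Ob then D_d 0 (snd x) else D_d R (snd x))"
      using AE by eventually_elim (use Dd_bnd R in auto)
  qed
qed

theorem lemma3:
  fixes pH pG :: "real measure"
  assumes "prob_space pH" and "prob_space pG"
    and "sets pH = sets borel" and "sets pG = sets borel"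
    and "AE h in pH. h \<ge> 0" and "AE g in pG. g \<ge> 0"
  shows "(\<forall>Rs Rc. Rs \<ge> 0 \<longrightarrow> Rc > 0 \<longrightarrow>
            ED_s (pH \<Otimes>\<^sub>M pG) Rs Rc \<ge> ED_j (pH \<Otimes>\<^sub>M pG) (Rs + Rc))
       \<and> (INF p \<in> {p :: real \<times> real. fst p \<ge> 0 \<and> snd p > 0}. ED_s (pH \<Otimes>\<^sub>M pG) (fst p) (snd p))
           \<ge> (INF Rj \<in> {0<..}. ED_j (pH \<Otimes>\<^sub>M pG) Rj)"
proof -
  interpret H: prob_space pH by fact
  interpret G: prob_space pG by fact
  interpret P: pair_prob_space pH pG ..
  define M where "M = pH \<Otimes>\<^sub>M pG"
  have PM: "prob_space M" unfolding M_def by (rule P.prob_space_axioms)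
  have S: "sets M = sets (borel \<Otimes>\<^sub>M borel)"
    unfolding M_def by (rule sets_pair_measure_cong) (use assms in auto)
  have AE: "AE x in M. snd x \<ge> 0"
    unfolding M_def
  proof (rule P.AE_pair_measure)
    have "{x \<in> space (pH \<Otimes>\<^sub>M pG). (\<lambda>_. 0::real) x \<le> snd x} \<in> sets (pH \<Otimes>\<^sub>M pG)"
      by (intro borel_measurable_le borel_measurable_const measurable_snd'')
         (simp add: measurable_cong_sets[OF assms(4) refl])
    then show "{x \<in> space (pH \<Otimes>\<^sub>M pG). 0 \<le> snd x} \<in> sets (pH \<Otimes>\<^sub>M pG)" .
    show "AE x in pH. AE y in pG. 0 \<le> snd (x, y)" using assms(6) by simp
  qed
  have main: "ED_s M Rs Rc \<ge> ED_j M (Rs + Rc)" if "Rs \<ge> 0" "Rc > 0" for Rs Rc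
  proof -
    have R: "Rs + Rc \<ge> 0" using that by simp
    note bs = ED_bounds[OF PM S AE R meas_s[of Rs Rc]]
    note bj = ED_bounds[OF PM S AE R meas_j[of "Rs + Rc"]]
    have "ED_j M (Rs + Rc) = (\<integral>x. (if x \<in> outage_j (Rs+Rc) then D_d 0 (snd x) else D_d (Rs+Rc) (snd x)) \<partial>M)"
      unfolding ED_j_def by (rule bj(1))
    also have "\<dots> \<le> (\<integral>x. (if x \<in> outage_s Rs Rc then D_d 0 (snd x) else D_d (Rs+Rc) (snd x)) \<partial>M)"
    proof (rule integral_mono_AE[OF bj(2) bs(2)])
      show "AE x in M. (if x \<in> outage_j (Rs+Rc) then D_d 0 (snd x) else D_d (Rs+Rc) (snd x))
          \<le> (if x \<in> outage_s Rs Rc then D_d 0 (snd x) else D_d (Rs+Rc) (snd x))"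
        using AE by eventually_elim (use Oj_sub[of Rs Rc] Dd_mono[OF R] in auto)
    qed
    also have "\<dots> = ED_s M Rs Rc"
      unfolding ED_s_def by (rule bs(1)[symmetric])
    finally show ?thesis .
  qed
  have nonneg: "ED_j M Rj \<ge> 0" if "Rj > 0" for Rj
  proof -
    have R: "Rj \<ge> 0" using that by simp
    note bj = ED_bounds[OF PM S AE R meas_j[of Rj]]
    show ?thesis unfolding ED_j_def bj(1) by (rule bj(3))
  qed
  have bdd: "bdd_below ((\<lambda>Rj. ED_j M Rj) ` {0<..})"
    by (rule bdd_belowI[where m=0]) (use nonneg in auto)
  have inf: "(INF p \<in> {p :: real \<times> real. fst p \<ge> 0 \<and> snd p > 0}. ED_s M (fst p) (snd p))
           \<ge> (INF Rj \<in> {0<..}. ED_j M Rj)"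
  proof (rule cINF_greatest)
    show "{p :: real \<times> real. fst p \<ge> 0 \<and> snd p > 0} \<noteq> {}" by (auto intro!: exI[of _ "1::real"])
    fix p :: "real \<times> real" assume p: "p \<in> {p. fst p \<ge> 0 \<and> snd p > 0}"
    have "(INF Rj \<in> {0<..}. ED_j M Rj) \<le> ED_j M (fst p + snd p)"
      by (rule cINF_lower[OF bdd]) (use p in auto)
    also have "\<dots> \<le> ED_s M (fst p) (snd p)" using main p by auto
    finally show "(INF Rj \<in> {0<..}. ED_j M Rj) \<le> ED_s M (fst p) (snd p)" .
  qed
  show ?thesis using main inf unfolding M_def by auto
qed

end
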